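(* Let $\Gamma$ be a group and $\Delta$ a finite set of distinct elements generating $\Gamma$. If there exists a homogeneous scalar quantum walk on the Cayley graph $C_\Delta(\Gamma)$, then for every ordered pair $(\delta_1,\delta_2)$ of distinct elements of $\Delta$ there exists an ordered pair $(\delta_3,\delta_4)\neq(\delta_1,\delta_2)$ of elements of $\Delta$ such that $\delta_1\delta_2^{-1}=\delta_3\delta_4^{-1}$.
   Context: The Cayley graph $C_\Delta(\Gamma)$ has vertex set $\Gamma$ and directed edges $(g,g\delta)$ for $g\in\Gamma$, $\delta\in\Delta$. Let $\ell^2(\Gamma)$ have orthonormal basis $\{|g\rangle\}_{g\in\Gamma}$, and for $\delta\in\Gamma$ let $U_\delta$ be the unitary operator on $\ell^2(\Gamma)$ with $U_\delta|g\rangle=|g\delta\rangle$. A homogeneous scalar quantum walk on $C_\Delta(\Gamma)$ is a unitary operator $W=\sum_{\delta\in\Delta}W_\delta U_\delta$ on $\ell^2(\Gamma)$ with complex coefficients $W_\delta$ that are all nonzero (a vanishing coefficient would amount to removing the edges labeled by that generator). *)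

theory Defs
  imports "HOL-Analysis.Analysis"
begin

text \<open>The group \<Gamma> is a type of class group_add (not necessarily commutative),
  written additively: g + d is the product g d, -d the inverse, and
  a - b = a + (-b) is a b^{-1}.\<close>

inductive_set gen_subgroup :: "'a::group_add set \<Rightarrow> 'a set" for D where
  gen_base: "d \<in> D \<Longrightarrow> d \<in> gen_subgroup D"
| gen_zero: "0 \<in> gen_subgroup D"
| gen_add: "a \<in> gen_subgroup D \<Longrightarrow> b \<in> gen_subgroup D \<Longrightarrow> a + b \<in> gen_subgroup D"
| gen_uminus: "a \<in> gen_subgroup D \<Longrightarrow> - a \<in> gen_subgroup D"

definition ell2 :: "('a \<Rightarrow> complex) set" where
  "ell2 = {\<psi>. (\<lambda>g. (cmod (\<psi> g))\<^sup>2) summable_on UNIV}"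

definition ell2_norm :: "('a \<Rightarrow> complex) \<Rightarrow> real" where
  "ell2_norm \<psi> = sqrt (\<Sum>\<^sub>\<infinity>g. (cmod (\<psi> g))\<^sup>2)"

definition unitary_ell2 :: "(('a \<Rightarrow> complex) \<Rightarrow> ('a \<Rightarrow> complex)) \<Rightarrow> bool" where
  "unitary_ell2 T \<longleftrightarrow>
     (\<forall>\<psi>\<in>ell2. T \<psi> \<in> ell2 \<and> ell2_norm (T \<psi>) = ell2_norm \<psi>) \<and>
     (\<forall>\<phi>\<in>ell2. \<exists>\<psi>\<in>ell2. T \<psi> = \<phi>)"

text \<open>The operator W = sum over d in D of W_d U_d, where U_d |g> = |g d>, i.e.
  (U_d psi)(h) = psi(h d^{-1}).\<close>
definition walk_op :: "'a::group_add set \<Rightarrow> ('a \<Rightarrow> complex) \<Rightarrow> ('a \<Rightarrow> complex) \<Rightarrow> ('a \<Rightarrow> complex)" where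
  "walk_op D W \<psi> = (\<lambda>h. \<Sum>d\<in>D. W d * \<psi> (h - d))"

definition homogeneous_scalar_qw :: "'a::group_add set \<Rightarrow> ('a \<Rightarrow> complex) \<Rightarrow> bool" where
  "homogeneous_scalar_qw D W \<longleftrightarrow> (\<forall>d\<in>D. W d \<noteq> 0) \<and> unitary_ell2 (walk_op D W)"

end

theory Submission
  imports Defs
begin

lemma ell2_fin:
  assumes F: "finite F" and z: "\<And>h. h \<notin> F \<Longrightarrow> \<phi> h = 0"
  shows "\<phi> \<in> ell2" and "(ell2_norm \<phi>)\<^sup>2 = (\<Sum>h\<in>F. (cmod (\<phi> h))\<^sup>2)"
proof -
  have s: "(\<lambda>g. (cmod (\<phi> g))\<^sup>2) summable_on UNIV \<longleftrightarrow> (\<lambda>g. (cmod (\<phi> g))\<^sup>2) summable_on F"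
    by (rule summable_on_cong_neutral) (auto simp: z)
  show "\<phi> \<in> ell2" unfolding ell2_def using s F by simp
  have i: "(\<Sum>\<^sub>\<infinity>g. (cmod (\<phi> g))\<^sup>2) = (\<Sum>\<^sub>\<infinity>g\<in>F. (cmod (\<phi> g))\<^sup>2)"
    by (rule infsum_cong_neutral) (auto simp: z)
  have "0 \<le> (\<Sum>h\<in>F. (cmod (\<phi> h))\<^sup>2)" by (rule sum_nonneg) simp
  then show "(ell2_norm \<phi>)\<^sup>2 = (\<Sum>h\<in>F. (cmod (\<phi> h))\<^sup>2)"
    unfolding ell2_norm_def i using F by simp
qed

lemma expand:
  fixes x y :: "'a \<Rightarrow> complex"
  shows "(\<Sum>h\<in>F. (x h + c * y h) * cnj (x h + c * y h)) =
    (\<Sum>h\<in>F. x h * cnj (x h)) + cnj c * (\<Sum>h\<in>F. x h * cnj (y h))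
    + c * (\<Sum>h\<in>F. y h * cnj (x h)) + (c * cnj c) * (\<Sum>h\<in>F. y h * cnj (y h))"
  by (simp add: algebra_simps sum.distrib sum_distrib_left)

lemma sum_sq_complex: "complex_of_real (\<Sum>h\<in>F. (cmod (\<phi> h))\<^sup>2) = (\<Sum>h\<in>F. \<phi> h * cnj (\<phi> h))"
  by (simp add: of_real_sum complex_norm_square del: of_real_power)

lemma dcancel: "(a::'a::group_add) - b = a - c \<longleftrightarrow> b = c"
proof
  assume "a - b = a - c"
  then have "a + - b = a + - c" by (simp only: diff_conv_add_uminus)
  then have "- b = - c" by (rule add_left_imp_eq)
  then show "b = c" by simp
qed simp

theorem proposition2:
  fixes \<Delta> :: "'a::group_add set"
  assumes "finite \<Delta>"
    and "gen_subgroup \<Delta> = UNIV"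
    and "\<exists>W. homogeneous_scalar_qw \<Delta> W"
  shows "\<forall>d1\<in>\<Delta>. \<forall>d2\<in>\<Delta>. d1 \<noteq> d2 \<longrightarrow>
           (\<exists>d3\<in>\<Delta>. \<exists>d4\<in>\<Delta>. (d3, d4) \<noteq> (d1, d2) \<and> d1 - d2 = d3 - d4)"
proof (intro ballI impI, rule ccontr)
  fix d1 d2 assume d1: "d1 \<in> \<Delta>" and d2: "d2 \<in> \<Delta>" and ne: "d1 \<noteq> d2"
    and nex: "\<not> (\<exists>d3\<in>\<Delta>. \<exists>d4\<in>\<Delta>. (d3, d4) \<noteq> (d1, d2) \<and> d1 - d2 = d3 - d4)"
  have uniq: "d3 = d1" if "d3 \<in> \<Delta>" "d4 \<in> \<Delta>" "d1 - d2 = d3 - d4" for d3 d4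
    using nex that by blast
  obtain W where hw: "homogeneous_scalar_qw \<Delta> W" using assms(3) by blast
  have Wnz: "\<And>d. d \<in> \<Delta> \<Longrightarrow> W d \<noteq> 0" and U: "unitary_ell2 (walk_op \<Delta> W)"
    using hw unfolding homogeneous_scalar_qw_def by auto
  define b where "b = d1 - d2"
  have bnz: "b \<noteq> 0" using ne by (simp add: b_def)
  define F where "F = \<Delta> \<union> (\<lambda>d. b + d) ` \<Delta> \<union> {0, b}"
  have finF: "finite F" using assms(1) by (simp add: F_def)
  define e :: "'a \<Rightarrow> 'a \<Rightarrow> complex" where "e a = (\<lambda>h. if h = a then 1 else 0)" for a
  define f where "f = walk_op \<Delta> W (e 0)"
  define g where "g = walk_op \<Delta> W (e b)"
  have fz: "f h = 0" if "h \<notin> F" for h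
  proof -
    have "W d * e 0 (h - d) = 0" if "d \<in> \<Delta>" for d
    proof -
      have "h - d \<noteq> 0" using that \<open>h \<notin> F\<close> by (auto simp: F_def)
      then show ?thesis by (simp add: e_def)
    qed
    then show ?thesis unfolding f_def walk_op_def by (intro sum.neutral) blast
  qed
  have gz: "g h = 0" if "h \<notin> F" for h
  proof -
    have "W d * e b (h - d) = 0" if "d \<in> \<Delta>" for d
    proof -
      have "h - d \<noteq> b"
      proof
        assume "h - d = b"
        then have "h = b + d" by (metis diff_add_cancel)
        then show False using that \<open>h \<notin> F\<close> by (auto simp: F_def)
      qed
      then show ?thesis by (simp add: e_def)
    qed
    then show ?thesis unfolding g_def walk_op_def by (intro sum.neutral) blast
  qed
  have key: "(\<Sum>h\<in>F. (f h + c * g h) * cnj (f h + c * g h)) =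
      (\<Sum>h\<in>F. (e 0 h + c * e b h) * cnj (e 0 h + c * e b h))" for c
  proof -
    define \<psi> where "\<psi> = (\<lambda>h. e 0 h + c * e b h)"
    have wp: "walk_op \<Delta> W \<psi> = (\<lambda>h. f h + c * g h)"
      unfolding walk_op_def \<psi>_def f_def g_def
      by (simp add: algebra_simps sum.distrib sum_distrib_left)
    have pz: "\<psi> h = 0" if "h \<notin> F" for h
      using that by (auto simp: \<psi>_def e_def F_def)
    have wz: "(\<lambda>h. f h + c * g h) h = 0" if "h \<notin> F" for h
      using that fz gz by simp
    have p2: "\<psi> \<in> ell2" using ell2_fin(1)[OF finF pz] .
    have "ell2_norm (walk_op \<Delta> W \<psi>) = ell2_norm \<psi>"
      using U p2 unfolding unitary_ell2_def by blast
    then have "(ell2_norm (\<lambda>h. f h + c * g h))\<^sup>2 = (ell2_norm \<psi>)\<^sup>2" by (simp add: wp)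
    then have "(\<Sum>h\<in>F. (cmod (f h + c * g h))\<^sup>2) = (\<Sum>h\<in>F. (cmod (\<psi> h))\<^sup>2)"
      using ell2_fin(2)[OF finF pz] ell2_fin(2)[OF finF wz] by simp
    then have "complex_of_real (\<Sum>h\<in>F. (cmod (f h + c * g h))\<^sup>2) =
        complex_of_real (\<Sum>h\<in>F. (cmod (\<psi> h))\<^sup>2)" by simp
    then show ?thesis unfolding sum_sq_complex \<psi>_def .
  qed
  define A where "A = (\<Sum>h\<in>F. f h * cnj (f h))"
  define B where "B = (\<Sum>h\<in>F. g h * cnj (g h))"
  define S where "S = (\<Sum>h\<in>F. f h * cnj (g h))"
  define T where "T = (\<Sum>h\<in>F. g h * cnj (f h))"
  define A' where "A' = (\<Sum>h\<in>F. e 0 h * cnj (e 0 h))"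
  define B' where "B' = (\<Sum>h\<in>F. e b h * cnj (e b h))"
  have S': "(\<Sum>h\<in>F. e 0 h * cnj (e b h)) = 0" using bnz by (intro sum.neutral) (auto simp: e_def)
  have T': "(\<Sum>h\<in>F. e b h * cnj (e 0 h)) = 0" using bnz by (intro sum.neutral) (auto simp: e_def)
  have K: "A + cnj c * S + c * T + (c * cnj c) * B = A' + (c * cnj c) * B'" for c
    using key[of c] unfolding expand A_def B_def S_def T_def A'_def B'_def S' T' by simp
  have k0: "A = A'" using K[of 0] by simp
  have k1: "A + S + T + B = A' + B'" using K[of 1] by simp
  have k2: "A - S - T + B = A' + B'" using K[of "-1"] by simp
  have k3: "A - \<i> * S + \<i> * T + B = A' + B'" using K[of "\<i>"] by simp
  have "2 * (S + T) = (A + S + T + B) - (A - S - T + B)" by (simp add: algebra_simps)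
  also have "\<dots> = (A' + B') - (A' + B')" by (simp only: k1 k2)
  also have "\<dots> = 0" by simp
  finally have ST: "S + T = 0" by (simp only: mult_eq_0_iff) simp
  have "B = (A + S + T + B) - A - (S + T)" by (simp add: algebra_simps)
  also have "\<dots> = (A' + B') - A - 0" by (simp only: k1 ST)
  also have "\<dots> = B'" using k0 by simp
  finally have BB: "B = B'" .
  have "\<i> * (T - S) = (A - \<i> * S + \<i> * T + B) - A - B" by (simp add: algebra_simps)
  also have "\<dots> = (A' + B') - A - B" by (simp only: k3)
  also have "\<dots> = 0" using k0 BB by simp
  finally have "\<i> * (T - S) = 0" .
  then have "T = S" by simp
  then have S0: "S = 0" using ST by simp
  have fd1: "f d1 = W d1"
  proof -
    have "f d1 = (\<Sum>d\<in>\<Delta>. if d = d1 then W d else 0)"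
      unfolding f_def walk_op_def e_def by (intro sum.cong) auto
    then show ?thesis using d1 assms(1) by simp
  qed
  have gd1: "g d1 = W d2"
  proof -
    have "g d1 = (\<Sum>d\<in>\<Delta>. if d = d2 then W d else 0)"
      unfolding g_def walk_op_def e_def b_def by (intro sum.cong) (auto simp: dcancel)
    then show ?thesis using d2 assms(1) by simp
  qed
  have other: "f h * cnj (g h) = 0" if "h \<in> F - {d1}" for h
  proof (rule ccontr)
    assume "f h * cnj (g h) \<noteq> 0"
    then have "f h \<noteq> 0" "g h \<noteq> 0" by auto
    have "\<exists>d\<in>\<Delta>. W d * e 0 (h - d) \<noteq> 0"
    proof (rule ccontr)
      assume "\<not> ?thesis"
      then have "f h = 0" unfolding f_def walk_op_def by (intro sum.neutral) blast
      with \<open>f h \<noteq> 0\<close> show False by simp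
    qed
    then obtain d where dd: "d \<in> \<Delta>" "W d * e 0 (h - d) \<noteq> 0" by blast
    have "\<exists>d\<in>\<Delta>. W d * e b (h - d) \<noteq> 0"
    proof (rule ccontr)
      assume "\<not> ?thesis"
      then have "g h = 0" unfolding g_def walk_op_def by (intro sum.neutral) blast
      with \<open>g h \<noteq> 0\<close> show False by simp
    qed
    then obtain d' where dd': "d' \<in> \<Delta>" "W d' * e b (h - d') \<noteq> 0" by blast
    have "h - d = 0" using dd(2) by (auto simp: e_def split: if_splits)
    then have hD: "h \<in> \<Delta>" using dd(1) by simp
    have "h - d' = b" using dd'(2) by (auto simp: e_def split: if_splits)
    then have "h = d1" using uniq[OF hD dd'(1)] by (simp add: b_def)
    then show False using that by simp
  qed
  have d1F: "d1 \<in> F" using d1 by (simp add: F_def)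
  have Ssplit: "S = f d1 * cnj (g d1) + (\<Sum>h\<in>F - {d1}. f h * cnj (g h))"
    unfolding S_def using sum.remove[OF finF d1F] by simp
  have "(\<Sum>h\<in>F - {d1}. f h * cnj (g h)) = 0" using other by (intro sum.neutral) blast
  then have "f d1 * cnj (g d1) + (\<Sum>h\<in>F - {d1}. f h * cnj (g h)) = W d1 * cnj (W d2)"
    using fd1 gd1 by simp
  with Ssplit have "S = W d1 * cnj (W d2)" by simp
  then show False using S0 Wnz[OF d1] Wnz[OF d2] by simp
qed

end
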